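(* Let $\mathcal{K}\subset\mathbb{R}^{d_x}$ be a compact domain and suppose $d_y=d_x+1$. Then there exists a continuous function $f^*\in C(\mathcal{K},\mathbb{R}^{d_y})$ and $\varepsilon>0$ such that for every matrix $W_1\in\mathbb{R}^{d_y\times d_x}$, every $b_1\in\mathbb{R}^{d_y}$ and every homeomorphism $\psi:\mathbb{R}^{d_y}\to\mathbb{R}^{d_y}$, $\sup_{x\in\mathcal{K}}\|\psi(W_1x+b_1)-f^*(x)\|\ge\varepsilon$; i.e., $f^*$ cannot be uniformly approximated on $\mathcal{K}$ by functions of the form $x\mapsto\psi(W_1x+b_1)$.
   Context: $\|\cdot\|$ is the Euclidean norm. *)

theory Defs
  imports "HOL-Analysis.Analysis"
begin

end

theory Submission
  imports Defs
begin

lemma emb_exists: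
  assumes "CARD('m) = CARD('n) + 1"
  obtains \<sigma> :: "'n::finite \<Rightarrow> 'm::finite" and j0 where "inj \<sigma>" "j0 \<notin> range \<sigma>" "UNIV = insert j0 (range \<sigma>)"
proof -
  obtain \<sigma> :: "'n \<Rightarrow> 'm" where s: "inj \<sigma>"
    using card_le_inj[of "UNIV::'n set" "UNIV::'m set"] assms by auto
  have "card (range \<sigma>) = CARD('n)" using s card_image by blast
  then have "card (UNIV - range \<sigma>) = 1"
    using assms by (simp add: card_Diff_subset)
  then obtain j0 where j0: "UNIV - range \<sigma> = {j0}" by (erule card_1_singletonE)
  show ?thesis apply (rule that[of \<sigma> j0]) using s j0 by auto
qed

lemma aux_tri:
  fixes f1 f2 g1 g2 :: "'a::real_normed_vector"
  assumes "norm (g1 - f1) < r/2" "norm (g2 - f2) < r/2"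
  shows "norm ((f1 - f2) - (g1 - g2)) < r"
proof -
  have e: "(f1 - f2) - (g1 - g2) = (f1 - g1) - (f2 - g2)" by (simp add: algebra_simps)
  have "norm ((f1 - g1) - (f2 - g2)) \<le> norm (f1 - g1) + norm (f2 - g2)"
    by (rule norm_triangle_ineq4)
  then show ?thesis using assms unfolding e by (simp add: norm_minus_commute)
qed

theorem lemma4p1:
  fixes K :: "(real^'n) set"
  assumes "compact K" and "interior K \<noteq> {}"
    and "CARD('m) = CARD('n) + 1"
  shows "\<exists>(f::real^'n \<Rightarrow> real^'m) \<epsilon>. continuous_on K f \<and> \<epsilon> > 0 \<and>
           (\<forall>(W1::real^'n^'m) (b1::real^'m) (\<psi>::real^'m \<Rightarrow> real^'m).
              (\<exists>\<phi>. homeomorphism UNIV UNIV \<psi> \<phi>) \<longrightarrow>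
              (SUP x\<in>K. norm (\<psi> (W1 *v x + b1) - f x)) \<ge> \<epsilon>)"
proof -
  obtain \<sigma> :: "'n \<Rightarrow> 'm" and j0 where sinj: "inj \<sigma>" and j0: "j0 \<notin> range \<sigma>"
    and univ: "UNIV = insert j0 (range \<sigma>)"
    using emb_exists[OF assms(3)] by blast
  define P :: "real^'m \<Rightarrow> real^'n" where "P y = (\<chi> i. y $ \<sigma> i)" for y
  define J :: "real^'n \<Rightarrow> real^'m" where "J z = (\<chi> j. if j \<in> range \<sigma> then z $ inv \<sigma> j else 0)" for z
  define N :: "real^'m" where "N = axis j0 1"
  have PJ: "P (J z) = z" for z
    by (simp add: P_def J_def vec_eq_iff sinj)
  have JP: "J (P y) + (y $ j0) *\<^sub>R N = y" for y
  proof -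
    have "(J (P y) + (y $ j0) *\<^sub>R N) $ j = y $ j" for j
    proof (cases "j = j0")
      case True then show ?thesis using j0 by (simp add: J_def N_def axis_def)
    next
      case False
      then have "j \<in> range \<sigma>" using univ by blast
      then show ?thesis using False by (simp add: J_def P_def N_def axis_def f_inv_into_f)
    qed
    then show ?thesis by (simp add: vec_eq_iff)
  qed
  have linP: "linear P"
    by (auto simp: linear_iff P_def vec_eq_iff)
  have linJ: "linear J"
    by (auto simp: linear_iff J_def vec_eq_iff)
  have normP: "norm (P y) \<le> norm y" for y
  proof -
    have "inner (P y) (P y) = (\<Sum>i\<in>UNIV. (y $ \<sigma> i)^2)"
      by (simp add: inner_vec_def P_def power2_eq_square)
    also have "\<dots> = (\<Sum>j\<in>range \<sigma>. (y $ j)^2)"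
      using sum.reindex[OF sinj, of "\<lambda>j. (y $ j)^2"] by simp
    also have "\<dots> \<le> (\<Sum>j\<in>UNIV. (y $ j)^2)"
      by (rule sum_mono2) auto
    also have "\<dots> = inner y y"
      by (simp add: inner_vec_def power2_eq_square)
    finally show ?thesis by (simp add: norm_le)
  qed
  have normJ: "norm z \<le> norm (J z)" for z
    using normP[of "J z"] PJ by simp
  have contJ: "continuous_on S J" for S
    using linJ linear_continuous_on linear_linear by blast
  have contP: "continuous_on S P" for S
    using linP linear_continuous_on linear_linear by blast
  obtain c where "c \<in> interior K" using assms(2) by blast
  then obtain \<delta> where \<delta>: "\<delta> > 0" "ball c \<delta> \<subseteq> K" by (meson mem_interior)
  define r where "r = \<delta> / 5"
  have r: "r > 0" using \<delta> by (simp add: r_def)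
  define i0 :: 'n where "i0 = undefined"
  define e :: "real^'n" where "e = axis i0 1"
  define c2 where "c2 = c + (3*r) *\<^sub>R e"
  have dcc2: "dist c c2 = 3*r" using r by (simp add: c2_def e_def dist_norm)
  have B1: "cball c r \<subseteq> K" using \<delta> r by (auto simp: r_def intro!: order_trans[OF _ \<delta>(2)])
  have B2: "cball c2 r \<subseteq> K"
  proof
    fix x assume "x \<in> cball c2 r"
    then have "dist c x < \<delta>" using dist_triangle[of c x c2] dcc2 r
      by (simp add: r_def dist_commute)
    then show "x \<in> K" using \<delta> by auto
  qed
  define \<alpha> where "\<alpha> x = max 0 (min 1 (2 - dist x c / r))" for x
  define \<beta> where "\<beta> x = max 0 (min 1 (2 - dist x c2 / r)) * ((x - c2) $ i0)" for x
  define f where "f x = \<alpha> x *\<^sub>R J (x - c) + \<beta> x *\<^sub>R N" for x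
  have f1: "f x = J (x - c)" if "x \<in> cball c r" for x
  proof -
    have "dist x c \<le> r" using that by (simp add: dist_commute)
    then have a: "\<alpha> x = 1" using r by (simp add: \<alpha>_def field_simps)
    have "dist x c2 \<ge> 2*r" using dist_triangle[of c c2 x] dcc2 that by (simp add: dist_commute)
    then have b: "\<beta> x = 0" using r by (simp add: \<beta>_def field_simps)
    show ?thesis by (simp add: f_def a b)
  qed
  have f2: "f x = ((x - c2) $ i0) *\<^sub>R N" if "x \<in> cball c2 r" for x
  proof -
    have "dist x c2 \<le> r" using that by (simp add: dist_commute)
    then have b: "\<beta> x = (x - c2) $ i0" using r by (simp add: \<beta>_def field_simps)
    have "dist x c \<ge> 2*r" using dist_triangle[of c2 c x] dcc2 that by (simp add: dist_commute)
    then have a: "\<alpha> x = 0" using r by (simp add: \<alpha>_def field_simps)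
    show ?thesis by (simp add: f_def a b)
  qed
  have contf: "continuous_on K f"
    unfolding f_def \<alpha>_def \<beta>_def
    by (intro continuous_intros continuous_on_compose2[OF contJ]) (use r in auto)
  show ?thesis
  proof (intro exI conjI allI impI)
    show "continuous_on K f" by (rule contf)
    show "r/2 > 0" using r by simp
    fix W1 :: "real^'n^'m" and b1 :: "real^'m" and \<psi> :: "real^'m \<Rightarrow> real^'m"
    assume "\<exists>\<phi>. homeomorphism UNIV UNIV \<psi> \<phi>"
    then obtain \<phi> where hom: "homeomorphism UNIV UNIV \<psi> \<phi>" by blast
    have contpsi: "continuous_on UNIV \<psi>" and inv\<psi>: "\<And>a. \<phi> (\<psi> a) = a"
      using hom by (auto simp: homeomorphism_def)
    define g where "g x = \<psi> (W1 *v x + b1)" for x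
    have contg: "continuous_on S g" for S
    proof -
      have "continuous_on S (\<lambda>x. W1 *v x + b1)"
        using matrix_vector_mul_bounded_linear[of W1] linear_continuous_on
        by (intro continuous_intros)
      then show ?thesis unfolding g_def
        using continuous_on_compose2[OF contpsi] by blast
    qed
    show "(SUP x\<in>K. norm (\<psi> (W1 *v x + b1) - f x)) \<ge> r/2"
    proof (rule ccontr)
      assume "\<not> ?thesis"
      then have lt: "(SUP x\<in>K. norm (g x - f x)) < r/2" by (simp add: g_def)
      have "compact ((\<lambda>x. norm (g x - f x)) ` K)"
        by (intro compact_continuous_image continuous_intros contg contf assms(1))
      then have bdd: "bdd_above ((\<lambda>x. norm (g x - f x)) ` K)"
        by (simp add: bounded_imp_bdd_above compact_imp_bounded)
      have close: "norm (g x - f x) < r/2" if "x \<in> K" for x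
        using cSUP_upper[OF that bdd] lt by linarith
      have injW: "v = 0" if "W1 *v v = 0" for v
      proof (rule ccontr)
        assume "v \<noteq> 0"
        define u where "u = (r / norm v) *\<^sub>R v"
        have nu: "norm u = r" using \<open>v \<noteq> 0\<close> r by (simp add: u_def)
        have x1: "c + u \<in> cball c r" and x2: "c - u \<in> cball c r"
          using nu by (auto simp: dist_norm)
        have "W1 *v u = 0" using that by (simp add: u_def matrix_vector_mult_scaleR)
        then have "g (c + u) = g (c - u)"
          by (simp add: g_def matrix_vector_right_distrib matrix_vector_mult_diff_distrib)
        moreover have "f (c + u) - f (c - u) = J (u + u)"
        proof -
          have "c - u - c = - u" by simp
          then have "f (c - u) = - J u" using f1[OF x2] linear_neg[OF linJ, of u] by simp
          moreover have "f (c + u) = J u" using f1[OF x1] by simp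
          ultimately show ?thesis using linear_add[OF linJ, of u u] by (simp only: diff_minus_eq_add minus_minus)
        qed
        ultimately have eq: "J (u + u) = (f (c + u) - g (c + u)) + (g (c - u) - f (c - u))"
          by (simp add: algebra_simps)
        have "norm (J (u + u)) \<le> norm (f (c + u) - g (c + u)) + norm (g (c - u) - f (c - u))"
          unfolding eq by (rule norm_triangle_ineq)
        also have "\<dots> < r"
        proof -
          have "c + u \<in> K" "c - u \<in> K" using x1 x2 B1 by auto
          then have "norm (g (c + u) - f (c + u)) < r/2" "norm (g (c - u) - f (c - u)) < r/2"
            using close by auto
          then show ?thesis by (simp add: norm_minus_commute)
        qed
        finally have lt2: "norm (u + u) < r" using normJ[of "u + u"] by linarith
        have "u + u = 2 *\<^sub>R u" by (rule scaleR_2[symmetric])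
        then have "norm (u + u) = 2 * r" using nu by simp
        then show False using lt2 r by simp
      qed
      define T where "T y = y - (g (c + P y) - g (c2 - (y $ j0) *\<^sub>R e))" for y
      have "\<exists>y\<in>cball 0 r. T y = y"
      proof (rule brouwer)
        show "compact (cball (0::real^'m) r)" "convex (cball (0::real^'m) r)" "cball (0::real^'m) r \<noteq> {}"
          using r by auto
        show "continuous_on (cball 0 r) T" unfolding T_def
          by (intro continuous_intros continuous_on_compose2[OF contg[of UNIV]] contP) auto
        show "T \<in> cball 0 r \<rightarrow> cball 0 r"
        proof
          fix y :: "real^'m" assume y: "y \<in> cball 0 r"
          have X1: "c + P y \<in> cball c r" using normP[of y] y by (simp add: dist_norm)
          have X2: "c2 - (y $ j0) *\<^sub>R e \<in> cball c2 r"
            using component_le_norm_cart[of y j0] y by (simp add: dist_norm e_def)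
          have "f (c + P y) - f (c2 - (y $ j0) *\<^sub>R e) = y"
            using f1[OF X1] f2[OF X2] JP[of y] by (simp add: e_def)
          then have hy: "T y = (f (c + P y) - f (c2 - (y $ j0) *\<^sub>R e)) - (g (c + P y) - g (c2 - (y $ j0) *\<^sub>R e))"
            unfolding T_def by metis
          have "c + P y \<in> K" "c2 - (y $ j0) *\<^sub>R e \<in> K" using X1 X2 B1 B2 by auto
          then have "norm (T y) < r" unfolding hy by (intro aux_tri close)
          then show "T y \<in> cball 0 r" by simp
        qed
      qed blast
      then obtain y where y: "y \<in> cball 0 r" "T y = y" by blast
      have X1: "c + P y \<in> cball c r" using normP[of y] y by (simp add: dist_norm)
      have X2: "c2 - (y $ j0) *\<^sub>R e \<in> cball c2 r"
        using component_le_norm_cart[of y j0] y by (simp add: dist_norm e_def)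
      have "g (c + P y) = g (c2 - (y $ j0) *\<^sub>R e)" using y(2) by (simp add: T_def)
      then have "W1 *v (c + P y) + b1 = W1 *v (c2 - (y $ j0) *\<^sub>R e) + b1"
        unfolding g_def by (metis inv\<psi>)
      then have "W1 *v ((c + P y) - (c2 - (y $ j0) *\<^sub>R e)) = 0"
        by (simp add: matrix_vector_mult_diff_distrib)
      then have "c + P y = c2 - (y $ j0) *\<^sub>R e" using injW eq_iff_diff_eq_0 by metis
      then show False using X1 X2 dcc2 r dist_triangle[of c c2 "c + P y"]
        by (simp add: dist_commute)
    qed
  qed
qed

end
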